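(* For $r>0$ and $y\in[-\tfrac12,\tfrac12]$ let $\Sigma(r,y)=\sum_{h\in\mathcal S(r)}\|hy\|^2$. There exist positive constants $A_1,A_2$ and $r_*$, depending only on $m$ and $\{p_1,\dots,p_m\}$, such that for all $0<r<r_*$: (a) if $|y|\le r/2$ then $\Sigma(r,y)\ge A_1(y/r)^2(\log 1/r)^{m-1}$; (b) if $r/2\le |y|\le\tfrac12$ then $\Sigma(r,y)\ge A_2(\log 1/r)^{m-1}$. (c) Suppose $m=2$. For every $K>0$ and $\delta>0$ there exist $B>0$ and $r_{**}>0$ (depending on $p_1,p_2,K,\delta$) such that for every $0<r<r_{**}$ there is a set $E(K,r)\subseteq[-\tfrac12,\tfrac12]$ of Lebesgue measure at most $Br^{1-\delta}$ with $\Sigma(r,y)\ge K\log(1/r)$ for all $y\in[-\tfrac12,\tfrac12]\setminus E(K,r)$.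
   Context: Fix an integer $m\ge 2$ and integers $1<p_1<\dots<p_m$ with $\gcd(p_i,p_j)=1$ for $i\neq j$; let $\mathcal S=\{p_1^{\alpha_1}\cdots p_m^{\alpha_m}:\alpha_i\in\mathbb Z_{\ge0}\}$ and $\mathcal S(r)=\{h\in\mathcal S: hr\le1\}$ for $r>0$. $\|x\|$ denotes the distance from the real number $x$ to the nearest integer. *)

theory Defs
  imports "HOL-Analysis.Analysis"
begin

definition smooth_set :: "nat \<Rightarrow> (nat \<Rightarrow> nat) \<Rightarrow> nat set" where
  "smooth_set m p = {\<Prod>i\<in>{1..m}. p i ^ \<alpha> i | \<alpha>. True}"

definition smooth_set_le :: "nat \<Rightarrow> (nat \<Rightarrow> nat) \<Rightarrow> real \<Rightarrow> nat set" where
  "smooth_set_le m p r = {h \<in> smooth_set m p. real h * r \<le> 1}"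

definition dist_nint :: "real \<Rightarrow> real" where
  "dist_nint x = (INF k::int. \<bar>x - real_of_int k\<bar>)"

definition Sigma_sum :: "nat \<Rightarrow> (nat \<Rightarrow> nat) \<Rightarrow> real \<Rightarrow> real \<Rightarrow> real" where
  "Sigma_sum m p r y = (\<Sum>h\<in>smooth_set_le m p r. (dist_nint (real h * y))^2)"

end

theory Submission imports Defs begin

lemma dn_eq: "dist_nint x = \<bar>x - of_int (round x)\<bar>"
proof -
  have "(INF k::int. \<bar>x - real_of_int k\<bar>) = \<bar>x - of_int (round x)\<bar>"
  proof (rule antisym)
    show "(INF k::int. \<bar>x - real_of_int k\<bar>) \<le> \<bar>x - of_int (round x)\<bar>"
      by (rule cINF_lower) (auto intro: bdd_belowI[of _ 0])
    show "\<bar>x - of_int (round x)\<bar> \<le> (INF k::int. \<bar>x - real_of_int k\<bar>)"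
      by (rule cINF_greatest) (auto simp: round_diff_minimal)
  qed
  then show ?thesis by (simp add: dist_nint_def)
qed

lemma dn_le: "dist_nint x \<le> \<bar>x - of_int k\<bar>"
  unfolding dn_eq by (rule round_diff_minimal)

lemma dn_nonneg: "dist_nint x \<ge> 0"
  unfolding dn_eq by simp

lemma dn_half: "dist_nint x \<le> 1/2"
  unfolding dn_eq using of_int_round_abs_le[of x] by linarith

lemma dn_lip: "dist_nint z \<le> dist_nint x + \<bar>x - z\<bar>"
proof -
  have "dist_nint z \<le> \<bar>z - of_int (round x)\<bar>" by (rule dn_le)
  also have "\<dots> \<le> \<bar>x - of_int (round x)\<bar> + \<bar>x - z\<bar>" by linarith
  finally show ?thesis unfolding dn_eq .
qed

lemma dn_small: "\<bar>x\<bar> \<le> 1/2 \<Longrightarrow> dist_nint x = \<bar>x\<bar>"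
proof -
  assume a: "\<bar>x\<bar> \<le> 1/2"
  have "dist_nint x \<le> \<bar>x\<bar>" using dn_le[of x 0] by simp
  moreover have "\<bar>x\<bar> \<le> \<bar>x - of_int (round x)\<bar>"
  proof (cases "round x = 0")
    case True then show ?thesis by simp
  next
    case False
    then have "\<bar>real_of_int (round x)\<bar> \<ge> 1" by linarith
    then show ?thesis using a by linarith
  qed
  ultimately show ?thesis unfolding dn_eq by linarith
qed

lemma dn_shift: "dist_nint (x + of_int k) = dist_nint x"
proof -
  have "dist_nint (x + of_int k) \<le> dist_nint x"
    using dn_le[of "x + of_int k" "round x + k"] unfolding dn_eq by simp
  moreover have "dist_nint x \<le> dist_nint (x + of_int k)"
    using dn_le[of "x" "round (x + of_int k) - k"] unfolding dn_eq by (simp add: algebra_simps)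
  ultimately show ?thesis by simp
qed

lemma dn_rec:
  fixes q :: nat and u a b :: real
  assumes "q \<ge> 1" "dist_nint u < a" "dist_nint (q * u) < b" "q * a + b \<le> 1"
  shows "dist_nint (q * u) = q * dist_nint u"
proof -
  define t where "t = u - of_int (round u)"
  define s where "s = q * u - of_int (round (q*u))"
  define j where "j = round (q*u) - q * round u"
  have qt: "q * t = s + of_int j" unfolding t_def s_def j_def by (simp add: algebra_simps)
  have ht: "\<bar>t\<bar> < a" using assms(2) unfolding t_def dn_eq .
  have hs: "\<bar>s\<bar> < b" using assms(3) unfolding s_def dn_eq .
  have "\<bar>q * t\<bar> \<le> q * a" using ht assms(1) by (simp add: abs_mult mult_left_mono)
  then have "\<bar>real_of_int j\<bar> < 1" using qt hs assms(4) by linarith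
  then have "j = 0" by linarith
  then have "\<bar>s\<bar> = q * \<bar>t\<bar>" using qt by (metis abs_mult abs_of_nat add_0_right of_int_0)
  then show ?thesis unfolding dn_eq t_def s_def by simp
qed

lemma dn_div:
  fixes q :: nat and z :: int
  assumes "q \<ge> 1" "\<not> int q dvd z"
  shows "dist_nint (of_int z / q) \<ge> 1 / q"
proof -
  have "z - q * round (of_int z / q) \<noteq> 0" using assms(2) by (metis dvd_triv_left eq_iff_diff_eq_0)
  then have h: "\<bar>real_of_int (z - q * round (of_int z / q))\<bar> \<ge> 1" by linarith
  have "of_int z / q - of_int (round (of_int z / q)) = real_of_int (z - q * round (of_int z / q)) / q"
    using assms(1) by (simp add: field_simps)
  then have "dist_nint (of_int z / q) = \<bar>real_of_int (z - q * round (of_int z / q))\<bar> / q"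
    unfolding dn_eq by simp
  then show ?thesis using h assms(1) by (simp add: divide_right_mono)
qed

lemma dn_wrap:
  fixes q k :: nat and u \<theta> :: real
  assumes q2: "q \<ge> 2" and g: "dist_nint u \<ge> \<theta>" and b: "dist_nint (q * u) < q * \<theta>"
    and cop: "coprime k q" and kb: "k * dist_nint (q * u) \<le> 1/2"
  shows "dist_nint (k * u) \<ge> 1 / (2*q)"
proof -
  define t where "t = u - of_int (round u)"
  define s where "s = q * u - of_int (round (q*u))"
  define j where "j = round (q*u) - q * round u"
  have qt: "q * t = s + of_int j" unfolding t_def s_def j_def by (simp add: algebra_simps)
  have ht: "\<bar>t\<bar> \<ge> \<theta>" using g unfolding t_def dn_eq .
  have hs: "\<bar>s\<bar> < q * \<theta>" using b unfolding s_def dn_eq .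
  have ht2: "\<bar>t\<bar> \<le> 1/2" using dn_half[of u] unfolding t_def dn_eq .
  have hs2: "\<bar>s\<bar> \<le> 1/2" using dn_half[of "q*u"] unfolding s_def dn_eq .
  have ksb: "k * \<bar>s\<bar> \<le> 1/2" using kb unfolding s_def dn_eq .
  have "j \<noteq> 0"
  proof
    assume "j = 0"
    then have "q * \<bar>t\<bar> = \<bar>s\<bar>" using qt by (metis abs_mult abs_of_nat add_0_right of_int_0)
    then have "q * \<bar>t\<bar> < q * \<theta>" using hs by simp
    then show False using ht q2 by simp
  qed
  moreover have "\<bar>j\<bar> < q"
  proof -
    have "\<bar>q * t\<bar> \<le> q / 2" using ht2 q2 by (simp add: abs_mult)
    then have "\<bar>real_of_int j\<bar> \<le> q/2 + 1/2" using qt hs2 by linarith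
    then show ?thesis using q2 by linarith
  qed
  ultimately have nd: "\<not> int q dvd j"
    using dvd_imp_le_int[of j "int q"] by force
  have nd2: "\<not> int q dvd (int k * j)"
  proof
    assume "int q dvd int k * j"
    moreover have "coprime (int q) (int k)" using cop by (simp add: coprime_commute)
    ultimately have "int q dvd j" using coprime_dvd_mult_right_iff by blast
    then show False using nd by simp
  qed
  have ku: "k * u = of_int (int k * round u) + (of_int (int k * j) / q + k * s / q)"
  proof -
    have "k * u = k * of_int (round u) + k * t" unfolding t_def by (simp add: algebra_simps)
    also have "k * t = (k * (q * t)) / q" using q2 by simp
    also have "\<dots> = of_int (int k * j) / q + k * s / q" using qt by (simp add: algebra_simps add_divide_distrib)
    finally show ?thesis by simp
  qed
  have "dist_nint (k * u) = dist_nint (of_int (int k * j) / q + k * s / q)"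
    using ku dn_shift by (metis add.commute)
  moreover have "dist_nint (of_int (int k * j) / q) \<le> dist_nint (of_int (int k * j) / q + k * s / q) + \<bar>k * s / q\<bar>"
    using dn_lip[of "of_int (int k * j) / q" "of_int (int k * j) / q + k * s / q"] by simp
  moreover have "\<bar>k * s / q\<bar> \<le> 1 / (2*q)" using ksb q2 by (simp add: abs_mult field_simps)
  moreover have "dist_nint (of_int (int k * j) / q) \<ge> 1/q" using dn_div[OF _ nd2] q2 by simp
  ultimately show ?thesis by (simp add: field_simps)
qed

lemma ss_fin: "0 < \<sigma> \<Longrightarrow> finite (smooth_set_le n p \<sigma>)"
proof -
  assume s: "0 < \<sigma>"
  have "smooth_set_le n p \<sigma> \<subseteq> {..nat \<lceil>1/\<sigma>\<rceil>}"
  proof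
    fix h assume "h \<in> smooth_set_le n p \<sigma>"
    then have "real h * \<sigma> \<le> 1" by (simp add: smooth_set_le_def)
    then have "real h \<le> 1/\<sigma>" using s by (simp add: field_simps)
    then have "real h \<le> of_int \<lceil>1/\<sigma>\<rceil>" by linarith
    then show "h \<in> {..nat \<lceil>1/\<sigma>\<rceil>}" by simp
  qed
  then show ?thesis using finite_subset by blast
qed

lemma ss0: "smooth_set 0 p = {1}"
  by (simp add: smooth_set_def)

lemma ss1: "smooth_set (Suc 0) p = range (\<lambda>a. p 1 ^ a)"
  by (auto simp: smooth_set_def)

lemma ss_mul:
  assumes "k \<in> smooth_set n p"
  shows "p (Suc n) ^ c * k \<in> smooth_set (Suc n) p"
proof -
  obtain \<alpha> where k: "k = (\<Prod>i\<in>{1..n}. p i ^ \<alpha> i)" using assms by (auto simp: smooth_set_def)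
  define \<beta> where "\<beta> = \<alpha>(Suc n := c)"
  have "(\<Prod>i\<in>{1..Suc n}. p i ^ \<beta> i) = p (Suc n) ^ c * (\<Prod>i\<in>{1..n}. p i ^ \<beta> i)"
    by (simp add: \<beta>_def atLeastAtMostSuc_conv mult.commute)
  also have "(\<Prod>i\<in>{1..n}. p i ^ \<beta> i) = k" unfolding k \<beta>_def by (rule prod.cong) auto
  finally show ?thesis unfolding smooth_set_def by (metis (mono_tags, lifting) mem_Collect_eq)
qed

lemma ss_cop:
  assumes "\<And>i. i \<in> {1..n} \<Longrightarrow> coprime (p i) q" and "k \<in> smooth_set n p"
  shows "coprime k q"
  using assms by (auto simp: smooth_set_def intro!: prod_coprime_left)

lemma decomp:
  fixes f :: "nat \<Rightarrow> real" and q :: nat and \<sigma> :: real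
  assumes q: "q = p (Suc n)" "q > 1"
    and cop: "\<And>k. k \<in> smooth_set n p \<Longrightarrow> coprime k q"
    and s: "0 < \<sigma>" and Cs: "finite Cs" and f: "\<And>h. f h \<ge> 0"
  shows "(\<Sum>c\<in>Cs. \<Sum>k\<in>smooth_set_le n p (\<sigma> * real q ^ c). f (q ^ c * k))
          \<le> (\<Sum>h\<in>smooth_set_le (Suc n) p \<sigma>. f h)"
proof -
  let ?B = "\<lambda>c. smooth_set_le n p (\<sigma> * real q ^ c)"
  let ?g = "\<lambda>(c, k). q ^ c * k"
  have finB: "\<forall>c\<in>Cs. finite (?B c)" using s q by (auto intro!: ss_fin)
  have "(\<Sum>c\<in>Cs. \<Sum>k\<in>?B c. f (q ^ c * k)) = (\<Sum>x\<in>(SIGMA c:Cs. ?B c). f (?g x))"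
    using sum.Sigma[OF Cs finB] by (simp add: case_prod_beta')
  also have "\<dots> = (\<Sum>h\<in>?g ` (SIGMA c:Cs. ?B c). f h)"
  proof (rule sum.reindex[symmetric, unfolded comp_def])
    show "inj_on ?g (SIGMA c:Cs. ?B c)"
    proof (rule inj_onI)
      fix x y assume "x \<in> (SIGMA c:Cs. ?B c)" "y \<in> (SIGMA c:Cs. ?B c)" "?g x = ?g y"
      then obtain c k c' k' where xy: "x = (c,k)" "y = (c',k')" and k: "k \<in> ?B c" and k': "k' \<in> ?B c'" and e: "q ^ c * k = q ^ c' * k'"
        by auto
      have ck: "coprime k q" "coprime k' q" using k k' cop by (auto simp: smooth_set_le_def)
      have "q ^ c dvd q ^ c' * k'" using e by (metis dvd_triv_left)
      then have "q ^ c dvd q ^ c'" using ck(2) by (simp add: coprime_dvd_mult_left_iff coprime_commute)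
      then have "c \<le> c'" using q(2) by (simp add: power_dvd_imp_le)
      moreover have "q ^ c' dvd q ^ c * k" using e by (metis dvd_triv_left)
      then have "q ^ c' dvd q ^ c" using ck(1) by (simp add: coprime_dvd_mult_left_iff coprime_commute)
      then have "c' \<le> c" using q(2) by (simp add: power_dvd_imp_le)
      ultimately have "c = c'" by simp
      then show "x = y" using e q(2) xy by simp
    qed
  qed
  also have "\<dots> \<le> (\<Sum>h\<in>smooth_set_le (Suc n) p \<sigma>. f h)"
  proof (rule sum_mono2[OF ss_fin[OF s]])
    show "?g ` (SIGMA c:Cs. ?B c) \<subseteq> smooth_set_le (Suc n) p \<sigma>"
    proof
      fix h assume "h \<in> ?g ` (SIGMA c:Cs. ?B c)"
      then obtain c k where hk: "h = q ^ c * k" "c \<in> Cs" "k \<in> ?B c" by auto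
      then have k: "k \<in> smooth_set n p" "real k * (\<sigma> * q ^ c) \<le> 1" by (auto simp: smooth_set_le_def)
      then show "h \<in> smooth_set_le (Suc n) p \<sigma>" unfolding hk(1)
        using ss_mul[OF k(1), of c] q(1) by (simp add: smooth_set_le_def algebra_simps)
    qed
  qed (use f in auto)
  finally show ?thesis .
qed

lemma exN:
  fixes q :: nat and \<sigma> :: real
  assumes q: "q \<ge> 2" and s: "0 < \<sigma>" "\<sigma> \<le> 1"
  shows "\<exists>N. real q ^ N * \<sigma> \<le> 1 \<and> 1 < real q ^ Suc N * \<sigma>"
proof -
  obtain n where n: "1/\<sigma> < real q ^ n" using real_arch_pow[of "real q" "1/\<sigma>"] q by auto
  then have n1: "1 < real q ^ n * \<sigma>" using s by (simp add: field_simps)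
  define l where "l = (LEAST n. 1 < real q ^ n * \<sigma>)"
  have l1: "1 < real q ^ l * \<sigma>" unfolding l_def by (rule LeastI[of _ n], rule n1)
  have l0: "l \<noteq> 0" proof assume "l = 0" then show False using l1 s by simp qed
  then obtain N where N: "l = Suc N" using not0_implies_Suc by blast
  have "\<not> 1 < real q ^ N * \<sigma>" using not_less_Least[of N "\<lambda>n. 1 < real q ^ n * \<sigma>"] N unfolding l_def by simp
  then show ?thesis using l1 N by (intro exI[of _ N]) (simp add: not_less)
qed

lemma slice_bounds:
  fixes q c :: nat and \<sigma> s :: real
  assumes q: "q \<ge> 2" and sp: "0 < \<sigma>" "0 < s" "\<sigma> \<le> s^2"
    and c: "real c \<le> ln (1/\<sigma>) / (2 * ln q)"
  shows "\<sigma> * real q ^ c \<le> s" "ln (1 / (\<sigma> * real q ^ c)) \<ge> ln (1/\<sigma>) / 2"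
proof -
  have lq: "ln q > 0" using q by simp
  have cl: "c * ln q \<le> ln (1/\<sigma>) / 2" using c lq by (simp add: field_simps)
  have e: "ln (\<sigma> * real q ^ c) = ln \<sigma> + c * ln q" using sp q by (simp add: ln_mult ln_realpow)
  have l1: "ln (1/\<sigma>) = - ln \<sigma>" using sp by (simp add: ln_div)
  have "ln \<sigma> \<le> ln (s^2)" using sp by simp
  then have "ln \<sigma> \<le> 2 * ln s" using sp by (simp add: ln_realpow)
  then have "ln (\<sigma> * real q ^ c) \<le> ln s" using e cl l1 by linarith
  then show "\<sigma> * real q ^ c \<le> s" using sp q by simp
  have "ln (1 / (\<sigma> * real q ^ c)) = - ln (\<sigma> * real q ^ c)" using sp q by (simp add: ln_div)
  then show "ln (1 / (\<sigma> * real q ^ c)) \<ge> ln (1/\<sigma>) / 2" using e cl l1 by linarith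
qed

lemma floor_bound:
  fixes x :: real assumes "x \<ge> 0"
  shows "real (nat \<lfloor>x\<rfloor>) \<le> x" "x \<le> real (nat \<lfloor>x\<rfloor>) + 1"
  using assms by linarith+

lemma count:
  fixes m :: nat and p :: "nat \<Rightarrow> nat"
  assumes hp: "\<And>i. i \<in> {1..m} \<Longrightarrow> p i \<ge> 2"
    and hc: "\<And>i j. i \<in> {1..m} \<Longrightarrow> j \<in> {1..m} \<Longrightarrow> i \<noteq> j \<Longrightarrow> coprime (p i) (p j)"
  shows "n \<le> m \<Longrightarrow> \<exists>C>0. \<exists>s0>0. s0 \<le> 1 \<and> (\<forall>\<sigma>. 0 < \<sigma> \<and> \<sigma> \<le> s0 \<longrightarrow>
            C * ln (1/\<sigma>) ^ n \<le> real (card (smooth_set_le n p \<sigma>)))"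
proof (induction n)
  case 0
  have "\<forall>\<sigma>. 0 < \<sigma> \<and> \<sigma> \<le> 1 \<longrightarrow> 1 * ln (1/\<sigma>) ^ 0 \<le> real (card (smooth_set_le 0 p \<sigma>))"
  proof (intro allI impI)
    fix \<sigma> :: real assume "0 < \<sigma> \<and> \<sigma> \<le> 1"
    then have "smooth_set_le 0 p \<sigma> = {1}" by (auto simp: smooth_set_le_def ss0)
    then show "1 * ln (1/\<sigma>) ^ 0 \<le> real (card (smooth_set_le 0 p \<sigma>))" by simp
  qed
  then show ?case by (intro exI[of _ "1::real"] conjI) auto
next
  case (Suc n)
  then obtain C s0 where C: "C > 0" "s0 > 0" "s0 \<le> 1"
    and IH: "\<And>\<sigma>. 0 < \<sigma> \<Longrightarrow> \<sigma> \<le> s0 \<Longrightarrow> C * ln (1/\<sigma>) ^ n \<le> real (card (smooth_set_le n p \<sigma>))" by auto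
  define q where "q = p (Suc n)"
  have q2: "q \<ge> 2" using hp Suc.prems q_def by auto
  have lq: "ln q > 0" using q2 by simp
  have cop: "\<And>k. k \<in> smooth_set n p \<Longrightarrow> coprime k q"
    by (rule ss_cop[of n p]) (use hc Suc.prems q_def in auto)
  define C' where "C' = C / (2 ^ Suc n * ln q)"
  have "\<forall>\<sigma>. 0 < \<sigma> \<and> \<sigma> \<le> s0^2 \<longrightarrow> C' * ln (1/\<sigma>) ^ Suc n \<le> real (card (smooth_set_le (Suc n) p \<sigma>))"
  proof (intro allI impI)
    fix \<sigma> :: real assume sg: "0 < \<sigma> \<and> \<sigma> \<le> s0^2"
    have s1: "\<sigma> \<le> 1" using sg C by (smt (verit) power_le_one)
    define L where "L = ln (1/\<sigma>)"
    have L0: "L \<ge> 0" using sg s1 by (simp add: L_def)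
    define M where "M = nat \<lfloor>L / (2 * ln q)\<rfloor>"
    have M1: "L / (2 * ln q) \<le> real M + 1" using floor_bound(2)[of "L / (2 * ln q)"] L0 lq M_def by simp
    have per: "C * (L/2) ^ n \<le> real (card (smooth_set_le n p (\<sigma> * real q ^ c)))" if "c \<in> {0..M}" for c
    proof -
      have "real c \<le> real M" using that by simp
      then have cM: "real c \<le> ln (1/\<sigma>) / (2 * ln q)"
        using of_int_floor_le[of "L / (2 * ln q)"] L0 lq M_def L_def by simp linarith
      have b1: "\<sigma> * real q ^ c \<le> s0" and b2: "ln (1 / (\<sigma> * real q ^ c)) \<ge> L / 2"
        using slice_bounds[OF q2 _ C(2) _ cM] sg L_def by auto
      have "C * (L/2) ^ n \<le> C * ln (1 / (\<sigma> * real q ^ c)) ^ n"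
        using b2 L0 C(1) by (intro mult_left_mono power_mono) auto
      also have "\<dots> \<le> real (card (smooth_set_le n p (\<sigma> * real q ^ c)))"
        using IH[OF _ b1] sg q2 by simp
      finally show ?thesis .
    qed
    have "C' * L ^ Suc n = (L / (2 * ln q)) * (C * (L/2) ^ n)"
      unfolding C'_def by (simp add: power_divide field_simps)
    also have "\<dots> \<le> (real M + 1) * (C * (L/2) ^ n)"
      using M1 C(1) L0 by (intro mult_right_mono) auto
    also have "\<dots> = (\<Sum>c\<in>{0..M}. C * (L/2) ^ n)" by simp
    also have "\<dots> \<le> (\<Sum>c\<in>{0..M}. real (card (smooth_set_le n p (\<sigma> * real q ^ c))))"
      by (rule sum_mono) (rule per)
    also have "\<dots> = (\<Sum>c\<in>{0..M}. \<Sum>k\<in>smooth_set_le n p (\<sigma> * real q ^ c). (\<lambda>h. 1::real) (q ^ c * k))"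
      by simp
    also have "\<dots> \<le> (\<Sum>h\<in>smooth_set_le (Suc n) p \<sigma>. (\<lambda>h. 1::real) h)"
      using decomp[where q=q and p=p and n=n and f="\<lambda>h. 1::real" and \<sigma>=\<sigma> and Cs="{0..M}"] q_def q2 cop sg by simp
    also have "\<dots> = real (card (smooth_set_le (Suc n) p \<sigma>))" by simp
    finally show "C' * ln (1/\<sigma>) ^ Suc n \<le> real (card (smooth_set_le (Suc n) p \<sigma>))" unfolding L_def .
  qed
  moreover have "C' > 0" using C lq C'_def by simp
  moreover have "s0^2 > 0" "s0^2 \<le> 1" using C by (auto simp: power_le_one)
  ultimately show ?case by blast
qed

lemma Sigma_nonneg: "Sigma_sum n p r y \<ge> 0"
  unfolding Sigma_sum_def by (rule sum_nonneg) simp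

lemma Sigma_term:
  assumes "0 < r" "h \<in> smooth_set_le n p r"
  shows "dist_nint (real h * y) ^ 2 \<le> Sigma_sum n p r y"
  unfolding Sigma_sum_def using ss_fin[OF assms(1)] assms(2)
  by (intro member_le_sum) auto

lemma base1:
  fixes p :: "nat \<Rightarrow> nat" and \<sigma> x :: real
  assumes q2: "p 1 \<ge> 2" and s: "0 < \<sigma>" "\<sigma> \<le> 1" and dx: "\<sigma>/2 \<le> dist_nint x"
  shows "1 / (4 * real (p 1)^2) \<le> Sigma_sum 1 p \<sigma> x"
proof -
  define q where "q = p 1"
  have q: "q \<ge> 2" using q2 q_def by simp
  obtain N where N: "real q ^ N * \<sigma> \<le> 1" "1 < real q ^ Suc N * \<sigma>" using exN[OF q s] by auto
  have "\<exists>a\<le>N. dist_nint (real q ^ a * x) \<ge> 1 / (2*q)"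
  proof (rule ccontr)
    assume "\<not> ?thesis"
    then have sm: "\<And>a. a \<le> N \<Longrightarrow> dist_nint (real q ^ a * x) < 1 / (2*q)" by force
    have eq: "a \<le> N \<Longrightarrow> dist_nint (real q ^ a * x) = real q ^ a * dist_nint x" for a
    proof (induction a)
      case 0 then show ?case by simp
    next
      case (Suc a)
      have h1: "dist_nint (real q ^ a * x) < 1/(2*q)" using sm Suc.prems by simp
      have h2: "dist_nint (real q * (real q ^ a * x)) < 1/(2*q)" using sm[of "Suc a"] Suc.prems by (simp add: mult.assoc)
      have h3: "real q * (1/(2*q)) + 1/(2*q) \<le> 1" using q by (simp add: field_simps)
      have "dist_nint (real q * (real q ^ a * x)) = real q * dist_nint (real q ^ a * x)"
        by (rule dn_rec[OF _ h1 h2 h3]) (use q in simp)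
      then show ?case using Suc by (simp add: mult.assoc)
    qed
    have "real q ^ N * (\<sigma>/2) \<le> real q ^ N * dist_nint x" using dx by (intro mult_left_mono) auto
    then have "dist_nint (real q ^ N * x) \<ge> real q ^ N * (\<sigma>/2)" using eq[of N] by simp
    moreover have "real q ^ N * (\<sigma>/2) \<ge> 1 / (2*q)" using N(2) q by (simp add: field_simps)
    ultimately show False using sm[of N] by simp
  qed
  then obtain a where a: "a \<le> N" "dist_nint (real q ^ a * x) \<ge> 1 / (2*q)" by blast
  have "real q ^ a \<le> real q ^ N" using a q by (intro power_increasing) auto
  then have "real q ^ a * \<sigma> \<le> 1" using N(1) s by (smt (verit) mult_right_mono)
  then have mem: "q ^ a \<in> smooth_set_le 1 p \<sigma>" by (auto simp: smooth_set_le_def ss1 q_def)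
  have "1 / (4 * real q ^2) = (1/(2*q))^2" by (simp add: power2_eq_square)
  also have "\<dots> \<le> dist_nint (real q ^ a * x) ^ 2" using a q by (intro power_mono) auto
  also have "\<dots> \<le> Sigma_sum 1 p \<sigma> x" using Sigma_term[OF s(1) mem, of x] by simp
  finally show ?thesis unfolding q_def .
qed

lemma lowb:
  fixes m :: nat and p :: "nat \<Rightarrow> nat"
  assumes hp: "\<And>i. i \<in> {1..m} \<Longrightarrow> p i \<ge> 2"
    and hc: "\<And>i j. i \<in> {1..m} \<Longrightarrow> j \<in> {1..m} \<Longrightarrow> i \<noteq> j \<Longrightarrow> coprime (p i) (p j)"
  shows "1 \<le> n \<Longrightarrow> n \<le> m \<Longrightarrow> \<exists>A>0. \<exists>s0>0. s0 \<le> 1 \<and> (\<forall>\<sigma> x. 0 < \<sigma> \<and> \<sigma> \<le> s0 \<and> \<sigma>/2 \<le> dist_nint x \<longrightarrow>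
            A * ln (1/\<sigma>) ^ (n - 1) \<le> Sigma_sum n p \<sigma> x)"
proof (induction n)
  case 0 then show ?case by simp
next
  case (Suc n)
  show ?case
  proof (cases "n = 0")
    case True
    have q2: "p 1 \<ge> 2" using hp Suc.prems True by auto
    have "\<forall>\<sigma> x. 0 < \<sigma> \<and> \<sigma> \<le> 1 \<and> \<sigma>/2 \<le> dist_nint x \<longrightarrow>
            1 / (4 * real (p 1)^2) * ln (1/\<sigma>) ^ (Suc n - 1) \<le> Sigma_sum (Suc n) p \<sigma> x"
      using base1[where p=p, OF q2] True by simp
    moreover have "1 / (4 * real (p 1)^2) > 0" using q2 by simp
    ultimately show ?thesis by (intro exI[of _ "1 / (4 * real (p 1)^2)"] conjI exI[of _ "1::real"]) auto
  next
    case False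
    then obtain A s0 where A: "A > 0" "s0 > 0" "s0 \<le> 1"
      and IH: "\<And>\<sigma> x. 0 < \<sigma> \<Longrightarrow> \<sigma> \<le> s0 \<Longrightarrow> \<sigma>/2 \<le> dist_nint x \<Longrightarrow> A * ln (1/\<sigma>) ^ (n - 1) \<le> Sigma_sum n p \<sigma> x"
      using Suc by auto
    obtain C s1 where C: "C > 0" "s1 > 0" "s1 \<le> 1"
      and CI: "\<And>\<sigma>. 0 < \<sigma> \<Longrightarrow> \<sigma> \<le> s1 \<Longrightarrow> C * ln (1/\<sigma>) ^ n \<le> real (card (smooth_set_le n p \<sigma>))"
      using count[where p=p and m=m and n=n, OF hp hc] Suc.prems by auto
    define s where "s = min s0 s1"
    have s: "s > 0" "s \<le> s0" "s \<le> s1" "s \<le> 1" using A C by (auto simp: s_def)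
    define q where "q = p (Suc n)"
    have q2: "q \<ge> 2" using hp Suc.prems q_def by auto
    have lq: "ln q > 0" using q2 by simp
    have cop: "\<And>k. k \<in> smooth_set n p \<Longrightarrow> coprime k q"
      by (rule ss_cop[of n p]) (use hc Suc.prems q_def in auto)
    define A' where "A' = min (A / (2 ^ n * ln q)) (C / (2 ^ n * (4 * real q ^ 2)))"
    have A'0: "A' > 0" using A C lq q2 by (simp add: A'_def)
    have "\<forall>\<sigma> x. 0 < \<sigma> \<and> \<sigma> \<le> s^2 \<and> \<sigma>/2 \<le> dist_nint x \<longrightarrow> A' * ln (1/\<sigma>) ^ (Suc n - 1) \<le> Sigma_sum (Suc n) p \<sigma> x"
    proof (intro allI impI)
      fix \<sigma> x :: real assume sg: "0 < \<sigma> \<and> \<sigma> \<le> s^2 \<and> \<sigma>/2 \<le> dist_nint x"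
      have s1': "\<sigma> \<le> 1" using sg s by (smt (verit) power_le_one)
      define L where "L = ln (1/\<sigma>)"
      have L0: "L \<ge> 0" using sg s1' by (simp add: L_def)
      define M where "M = nat \<lfloor>L / (2 * ln q)\<rfloor>"
      have M1: "L / (2 * ln q) \<le> real M + 1" using floor_bound(2)[of "L / (2 * ln q)"] L0 lq M_def by simp
      have cb: "\<sigma> * real q ^ c \<le> s \<and> ln (1 / (\<sigma> * real q ^ c)) \<ge> L / 2" if "c \<le> M" for c
      proof -
        have "real c \<le> real M" using that by simp
        then have cM: "real c \<le> ln (1/\<sigma>) / (2 * ln q)"
          using of_int_floor_le[of "L / (2 * ln q)"] L0 lq M_def L_def by simp linarith
        show ?thesis using slice_bounds[OF q2 _ s(1) _ cM] sg L_def by auto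
      qed
      let ?f = "\<lambda>h. dist_nint (real h * x) ^ 2"
      have feq: "?f (q ^ c * k) = dist_nint (real k * (real q ^ c * x)) ^ 2" for c k
        by (simp add: algebra_simps)
      show "A' * ln (1/\<sigma>) ^ (Suc n - 1) \<le> Sigma_sum (Suc n) p \<sigma> x"
      proof (cases "\<forall>c\<le>M. \<sigma> * real q ^ c / 2 \<le> dist_nint (real q ^ c * x)")
        case True
        have per: "A * (L/2) ^ (n-1) \<le> Sigma_sum n p (\<sigma> * real q ^ c) (real q ^ c * x)" if "c \<in> {0..M}" for c
        proof -
          have b: "\<sigma> * real q ^ c \<le> s0" "ln (1 / (\<sigma> * real q ^ c)) \<ge> L / 2" using cb[of c] that s by auto
          have "A * (L/2) ^ (n-1) \<le> A * ln (1 / (\<sigma> * real q ^ c)) ^ (n-1)"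
            using b L0 A(1) by (intro mult_left_mono power_mono) auto
          also have "\<dots> \<le> Sigma_sum n p (\<sigma> * real q ^ c) (real q ^ c * x)"
            using IH[OF _ b(1)] True that sg q2 by simp
          finally show ?thesis .
        qed
        have "A' * L ^ n \<le> (A / (2 ^ n * ln q)) * L ^ n"
          using L0 by (intro mult_right_mono) (auto simp: A'_def)
        also have "\<dots> = (L / (2 * ln q)) * (A * (L/2) ^ (n-1))"
          using False by (cases n) (auto simp: power_divide field_simps)
        also have "\<dots> \<le> (real M + 1) * (A * (L/2) ^ (n-1))"
          using M1 A(1) L0 by (intro mult_right_mono) auto
        also have "\<dots> = (\<Sum>c\<in>{0..M}. A * (L/2) ^ (n-1))" by simp
        also have "\<dots> \<le> (\<Sum>c\<in>{0..M}. Sigma_sum n p (\<sigma> * real q ^ c) (real q ^ c * x))"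
          by (rule sum_mono) (rule per)
        also have "\<dots> = (\<Sum>c\<in>{0..M}. \<Sum>k\<in>smooth_set_le n p (\<sigma> * real q ^ c). ?f (q ^ c * k))"
          unfolding Sigma_sum_def feq by simp
        also have "\<dots> \<le> (\<Sum>h\<in>smooth_set_le (Suc n) p \<sigma>. ?f h)"
          using decomp[where q=q and p=p and n=n and f="?f" and \<sigma>=\<sigma> and Cs="{0..M}"] q_def q2 cop sg by simp
        also have "\<dots> = Sigma_sum (Suc n) p \<sigma> x" by (simp add: Sigma_sum_def)
        finally show ?thesis unfolding L_def by simp
      next
        case False
        then have ex: "\<exists>c. c \<le> M \<and> dist_nint (real q ^ c * x) < \<sigma> * real q ^ c / 2" by force
        define c0 where "c0 = (LEAST c. c \<le> M \<and> dist_nint (real q ^ c * x) < \<sigma> * real q ^ c / 2)"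
        have c0: "c0 \<le> M" "dist_nint (real q ^ c0 * x) < \<sigma> * real q ^ c0 / 2"
          using LeastI_ex[OF ex] unfolding c0_def by auto
        have "c0 \<noteq> 0" proof assume "c0 = 0" then show False using c0 sg by simp qed
        then obtain c1 where c1: "c0 = Suc c1" using not0_implies_Suc by blast
        have g1: "\<sigma> * real q ^ c1 / 2 \<le> dist_nint (real q ^ c1 * x)"
          using not_less_Least[of c1 "\<lambda>c. c \<le> M \<and> dist_nint (real q ^ c * x) < \<sigma> * real q ^ c / 2"] c1 c0
          unfolding c0_def[symmetric] by force
        have b1: "dist_nint (real q * (real q ^ c1 * x)) < real q * (\<sigma> * real q ^ c1 / 2)"
          using c0(2) c1 by (simp add: algebra_simps)
        have cbs: "\<sigma> * real q ^ c0 \<le> s1" "ln (1 / (\<sigma> * real q ^ c0)) \<ge> L / 2" using cb[OF c0(1)] s by auto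
        let ?S0 = "smooth_set_le n p (\<sigma> * real q ^ c0)"
        let ?S1 = "smooth_set_le n p (\<sigma> * real q ^ c1)"
        have sub: "?S0 \<subseteq> ?S1"
        proof
          fix k assume "k \<in> ?S0"
          then have "k \<in> smooth_set n p" "real k * (\<sigma> * real q ^ c0) \<le> 1" by (auto simp: smooth_set_le_def)
          moreover have "real k * (\<sigma> * real q ^ c1) \<le> real k * (\<sigma> * real q ^ c0)"
            using c1 q2 sg by (intro mult_left_mono) (auto simp: field_simps)
          ultimately show "k \<in> ?S1" by (auto simp: smooth_set_le_def)
        qed
        have kb: "1 / (4 * real q ^ 2) \<le> ?f (q ^ c1 * k)" if "k \<in> ?S0" for k
        proof -
          have k: "k \<in> smooth_set n p" "real k * (\<sigma> * real q ^ c0) \<le> 1" using that by (auto simp: smooth_set_le_def)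
          have "real k * dist_nint (real q * (real q ^ c1 * x)) \<le> real k * (real q * (\<sigma> * real q ^ c1 / 2))"
            using b1 by (intro mult_left_mono) auto
          also have "\<dots> = real k * (\<sigma> * real q ^ c0) / 2" using c1 by simp
          finally have kb: "real k * dist_nint (real q * (real q ^ c1 * x)) \<le> 1/2" using k(2) by simp
          have "1 / (2 * real q) \<le> dist_nint (real k * (real q ^ c1 * x))"
            using dn_wrap[OF q2 g1 b1 cop[OF k(1)] kb] by simp
          then have "(1 / (2 * real q))^2 \<le> dist_nint (real k * (real q ^ c1 * x)) ^ 2"
            using q2 by (intro power_mono) auto
          then show ?thesis using feq[of c1 k] by (simp add: power2_eq_square)
        qed
        have "A' * L ^ n \<le> (C / (2 ^ n * (4 * real q ^ 2))) * L ^ n"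
          using L0 by (intro mult_right_mono) (auto simp: A'_def)
        also have "\<dots> = (C * (L/2) ^ n) * (1 / (4 * real q ^ 2))"
          by (simp add: power_divide field_simps)
        also have "\<dots> \<le> real (card ?S0) * (1 / (4 * real q ^ 2))"
        proof (intro mult_right_mono)
          have "C * (L/2) ^ n \<le> C * ln (1 / (\<sigma> * real q ^ c0)) ^ n"
            using cbs L0 C(1) by (intro mult_left_mono power_mono) auto
          also have "\<dots> \<le> real (card ?S0)" using CI cbs(1) sg q2 by simp
          finally show "C * (L/2) ^ n \<le> real (card ?S0)" .
        qed simp
        also have "\<dots> = (\<Sum>k\<in>?S0. 1 / (4 * real q ^ 2))" by simp
        also have "\<dots> \<le> (\<Sum>k\<in>?S0. ?f (q ^ c1 * k))" by (rule sum_mono) (rule kb)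
        also have "\<dots> \<le> (\<Sum>k\<in>?S1. ?f (q ^ c1 * k))"
          by (rule sum_mono2[OF ss_fin sub]) (use sg q2 in auto)
        also have "\<dots> = (\<Sum>c\<in>{c1}. \<Sum>k\<in>smooth_set_le n p (\<sigma> * real q ^ c). ?f (q ^ c * k))" by simp
        also have "\<dots> \<le> (\<Sum>h\<in>smooth_set_le (Suc n) p \<sigma>. ?f h)"
          using decomp[where q=q and p=p and n=n and f="?f" and \<sigma>=\<sigma> and Cs="{c1}"] q_def q2 cop sg by simp
        also have "\<dots> = Sigma_sum (Suc n) p \<sigma> x" by (simp add: Sigma_sum_def)
        finally show ?thesis unfolding L_def by simp
      qed
    qed
    moreover have "s^2 > 0" "s^2 \<le> 1" using s by (auto simp: power_le_one)
    ultimately show ?thesis using A'0 by blast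
  qed
qed

definition Dset :: "nat \<Rightarrow> nat \<Rightarrow> nat \<Rightarrow> int set" where
  "Dset q N J = (\<lambda>xs. sum_list (map (\<lambda>(a,e). e * int q ^ (N - 1 - a)) xs)) `
      {xs. set xs \<subseteq> ({0..N} \<times> {-int q..int q}) \<and> length xs = 2*J}"

lemma Dset_card: "finite (Dset q N J) \<and> card (Dset q N J) \<le> ((N+1) * (2*q+1)) ^ (2*J)"
proof -
  let ?A = "{0..N} \<times> {-int q..int q}"
  have fa: "finite ?A" by simp
  have "nat (2 * int q + 1) = 2*q+1" by simp
  then have cA: "card ?A = (N+1) * (2*q+1)" by (simp add: card_cartesian_product del: nat_int_add)
  have fl: "finite {xs. set xs \<subseteq> ?A \<and> length xs = 2*J}" using finite_lists_length_eq[OF fa] .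
  have cl: "card {xs. set xs \<subseteq> ?A \<and> length xs = 2*J} = card ?A ^ (2*J)" using card_lists_length_eq[OF fa] .
  show ?thesis unfolding Dset_def using fl cl cA card_image_le[OF fl] by simp
qed

lemma sparse:
  fixes q N J :: nat and x :: real
  assumes q: "q \<ge> 2" and cg: "card {a \<in> {0..N}. 1/(2*q) \<le> dist_nint (real q ^ a * x)} < J"
  shows "\<exists>D\<in>Dset q N J. \<bar>real q ^ N * x - (real q ^ N * of_int (round x) + of_int D)\<bar> \<le> 1/2"
proof -
  define G where "G = {a \<in> {0..N}. 1/(2*q) \<le> dist_nint (real q ^ a * x)}"
  define R where "R a = round (real q ^ a * x)" for a
  define d where "d a = R (Suc a) - int q * R a" for a
  define t where "t a = real q ^ a * x - of_int (R a)" for a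
  have tb: "\<bar>t a\<bar> = dist_nint (real q ^ a * x)" for a unfolding t_def R_def dn_eq ..
  have dt: "real_of_int (d a) = q * t a - t (Suc a)" for a unfolding d_def t_def by (simp add: algebra_simps)
  have db: "\<bar>d a\<bar> \<le> int q" for a
  proof -
    have "\<bar>t a\<bar> \<le> 1/2" using tb[of a] dn_half[of "real q ^ a * x"] by simp
    then have "real q * \<bar>t a\<bar> \<le> real q * (1/2)" by (intro mult_left_mono) auto
    then have "\<bar>q * t a\<bar> \<le> q/2" by (simp add: abs_mult)
    then have "\<bar>real_of_int (d a)\<bar> \<le> q/2 + 1/2" using dt[of a] tb[of "Suc a"] dn_half[of "real q ^ Suc a * x"] by linarith
    then have "\<bar>real_of_int (d a)\<bar> < q + 1" using q by linarith
    then show ?thesis by linarith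
  qed
  have d0: "d a = 0" if "a \<notin> G" "Suc a \<notin> G" "a < N" for a
  proof -
    have "\<bar>t a\<bar> < 1/(2*q)" "\<bar>t (Suc a)\<bar> < 1/(2*q)" using that tb unfolding G_def by auto
    then have "\<bar>q * t a\<bar> < 1/2" using q by (simp add: abs_mult field_simps)
    moreover have "1/(2*real q) \<le> 1/4" using q by (simp add: field_simps)
    ultimately have "\<bar>real_of_int (d a)\<bar> < 1" using dt[of a] \<open>\<bar>t (Suc a)\<bar> < 1/(2*q)\<close> by linarith
    then show ?thesis by linarith
  qed
  have RN: "R n = int q ^ n * R 0 + (\<Sum>a<n. d a * int q ^ (n - 1 - a))" for n
  proof (induction n)
    case 0 then show ?case by simp
  next
    case (Suc n)
    have "(\<Sum>a<Suc n. d a * int q ^ (Suc n - 1 - a)) = (\<Sum>a<n. d a * int q ^ (n - a)) + d n"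
      by simp
    also have "(\<Sum>a<n. d a * int q ^ (n - a)) = int q * (\<Sum>a<n. d a * int q ^ (n - 1 - a))"
      unfolding sum_distrib_left
    proof (rule sum.cong)
      fix a assume "a \<in> {..<n}"
      then have "n - a = Suc (n - 1 - a)" by auto
      then show "d a * int q ^ (n - a) = int q * (d a * int q ^ (n - 1 - a))" by simp
    qed simp
    finally have e1: "(\<Sum>a<Suc n. d a * int q ^ (Suc n - 1 - a)) = int q * (\<Sum>a<n. d a * int q ^ (n - 1 - a)) + d n" .
    have e2: "R (Suc n) = d n + int q * R n" by (simp add: d_def)
    show ?case unfolding e1 e2 Suc.IH by (simp add: algebra_simps)
  qed
  define T where "T = {a \<in> {0..<N}. d a \<noteq> 0}"
  have fT: "finite T" by (simp add: T_def)
  have TG: "T \<subseteq> G \<union> (\<lambda>b. b - 1) ` G"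
  proof
    fix a assume "a \<in> T"
    then have a: "a < N" "d a \<noteq> 0" by (auto simp: T_def)
    then have "a \<in> G \<or> Suc a \<in> G" using d0 by blast
    then show "a \<in> G \<union> (\<lambda>b. b - 1) ` G" by (metis UnI1 UnI2 diff_Suc_1 image_eqI)
  qed
  have fG: "finite G" by (simp add: G_def)
  have "card T \<le> card (G \<union> (\<lambda>b. b - 1) ` G)" using TG fG by (intro card_mono) auto
  also have "\<dots> \<le> card G + card G" using card_Un_le[of G "(\<lambda>b. b - 1) ` G"] card_image_le[OF fG, of "\<lambda>b. b - 1"] by linarith
  finally have cT: "card T \<le> 2*J" using cg unfolding G_def[symmetric] by linarith
  define xs where "xs = map (\<lambda>a. (a, d a)) (sorted_list_of_set T) @ replicate (2*J - card T) (0::nat, 0::int)"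
  let ?g = "\<lambda>(a,e). e * int q ^ (N - 1 - a)"
  have "length xs = 2*J" using cT fT by (simp add: xs_def)
  moreover have "set xs \<subseteq> {0..N} \<times> {-int q..int q}"
  proof -
    have "- int q \<le> d a" "d a \<le> int q" for a using db[of a] by linarith+
    then show ?thesis using fT by (auto simp: xs_def T_def)
  qed
  ultimately have mem: "sum_list (map ?g xs) \<in> Dset q N J" unfolding Dset_def by blast
  have "sum_list (map ?g xs) = (\<Sum>a\<in>T. d a * int q ^ (N - 1 - a))"
    using fT by (simp add: xs_def sum_list_distinct_conv_sum_set comp_def sum_list_replicate)
  also have "\<dots> = (\<Sum>a<N. d a * int q ^ (N - 1 - a))"
    by (rule sum.mono_neutral_left) (auto simp: T_def)
  finally have se: "sum_list (map ?g xs) = (\<Sum>a<N. d a * int q ^ (N - 1 - a))" .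
  have "\<bar>real q ^ N * x - (real q ^ N * of_int (round x) + of_int (sum_list (map ?g xs)))\<bar> = \<bar>t N\<bar>"
    unfolding se t_def RN[of N] by (simp add: R_def)
  also have "\<dots> \<le> 1/2" using tb[of N] dn_half by simp
  finally show ?thesis using mem by blast
qed

lemma poly_exp:
  fixes x :: real and k :: nat
  assumes "x \<ge> 0" "k \<ge> 1"
  shows "x ^ k \<le> real k ^ k * exp x"
proof -
  have "x / k \<le> exp (x / k)" by (smt (verit) exp_ge_add_one_self)
  then have "(x / k) ^ k \<le> exp (x / k) ^ k" using assms by (intro power_mono) auto
  also have "\<dots> = exp x" using exp_of_nat_mult[of k "x / k", symmetric] assms by simp
  finally have "(x / k) ^ k \<le> exp x" .
  then have "real k ^ k * (x / k) ^ k \<le> real k ^ k * exp x" by (intro mult_left_mono) auto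
  then show ?thesis using assms by (simp add: power_divide)
qed

lemma partc:
  fixes p :: "nat \<Rightarrow> nat" and K \<delta> :: real
  assumes hq1: "p 1 \<ge> 2" and hq2: "p 2 \<ge> 2" and cop12: "coprime (p 1) (p 2)" and K: "K > 0" and d: "\<delta> > 0"
  shows "\<exists>B>0. \<exists>rss>0. \<forall>r. 0 < r \<and> r < rss \<longrightarrow>
             (\<exists>E. E \<subseteq> {-1/2..1/2} \<and> E \<in> sets lebesgue \<and>
                  measure lebesgue E \<le> B * r powr (1 - \<delta>) \<and>
                  (\<forall>y \<in> {-1/2..1/2} - E. Sigma_sum 2 p r y \<ge> K * ln (1 / r)))"
proof -
  define q where "q = p 1"
  define Q where "Q = p 2"
  have q2: "q \<ge> 2" and Q2: "Q \<ge> 2" using hq1 hq2 q_def Q_def by auto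
  have lq: "ln (real q) > 0" and lQ: "ln (real Q) > 0" using q2 Q2 by auto
  define dd where "dd = min \<delta> (1/2) / 2"
  define \<eta> where "\<eta> = \<delta> - dd"
  have dd: "dd > 0" "dd \<le> 1/4" "\<eta> > 0" using d by (auto simp: dd_def \<eta>_def)
  define \<epsilon> where "\<epsilon> = 1 / (2 * real q)"
  have \<epsilon>0: "\<epsilon> > 0" using q2 by (simp add: \<epsilon>_def)
  define J where "J = nat \<lceil>K * ln (real Q) / (dd * \<epsilon>^2)\<rceil> + 1"
  have J1: "J \<ge> 1" by (simp add: J_def)
  have JK: "K * ln (real Q) / (dd * \<epsilon>^2) \<le> real J" unfolding J_def by linarith
  then have JK2: "K \<le> real J * \<epsilon>^2 * dd / ln (real Q)" using dd \<epsilon>0 lQ by (simp add: field_simps)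
  define k where "k = 2 * J + 1"
  define a1 where "a1 = 1 / ln (real q) + 1"
  define a2 where "a2 = dd / ln (real Q) + 1"
  define K0 where "K0 = 3 * real q * a2 * (a1 * (2 * real q + 1)) ^ (2*J)"
  define B where "B = K0 * (real k / \<eta>) ^ k * exp \<eta>"
  have "1 / ln (real q) > 0" "dd / ln (real Q) > 0" using lq lQ dd by auto
  then have a12: "a1 > 0" "a2 > 0" unfolding a1_def a2_def by linarith+
  have B0: "B > 0" using a12 q2 dd by (simp add: B_def K0_def k_def)
  have copQ: "\<And>k. k \<in> smooth_set 1 p \<Longrightarrow> coprime k Q"
    by (rule ss_cop[of 1 p]) (use cop12 Q_def in auto)
  have "\<forall>r. 0 < r \<and> r < 1/2 \<longrightarrow>
             (\<exists>E. E \<subseteq> {-1/2..1/2} \<and> E \<in> sets lebesgue \<and>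
                  measure lebesgue E \<le> B * r powr (1 - \<delta>) \<and>
                  (\<forall>y \<in> {-1/2..1/2} - E. Sigma_sum 2 p r y \<ge> K * ln (1 / r)))"
  proof (intro allI impI)
    fix r :: real assume r: "0 < r \<and> r < 1/2"
    define L where "L = ln (1/r)"
    have L0: "L > 0" using r by (simp add: L_def)
    have lnr: "ln r = - L" using r by (simp add: L_def ln_div)
    define C0 where "C0 = nat \<lfloor>dd * L / ln (real Q)\<rfloor>"
    define \<sigma> where "\<sigma> c = r * real Q ^ c" for c
    have Qc: "real Q ^ c \<le> r powr (- dd)" if "c \<le> C0" for c
    proof -
      have "real c \<le> real C0" using that by simp
      then have "real c \<le> dd * L / ln (real Q)"
        using of_int_floor_le[of "dd * L / ln (real Q)"] C0_def dd L0 lQ by simp linarith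
      then have "real c * ln (real Q) \<le> dd * L" using lQ by (simp add: field_simps)
      then have "ln (real Q ^ c) \<le> ln (r powr (- dd))" using r Q2 lnr by (simp add: ln_realpow ln_powr)
      moreover have "real Q ^ c > 0" "r powr (- dd) > 0" using r Q2 by auto
      ultimately show ?thesis using ln_le_cancel_iff by blast
    qed
    have \<sigma>b: "\<sigma> c \<le> r powr (1 - dd)" "r \<le> \<sigma> c" "0 < \<sigma> c" "\<sigma> c \<le> 1" if "c \<le> C0" for c
    proof -
      have "\<sigma> c \<le> r * r powr (- dd)" using Qc[OF that] r by (simp add: \<sigma>_def)
      also have "\<dots> = r powr (1 - dd)" using r by (simp add: powr_diff powr_minus field_simps)
      finally show "\<sigma> c \<le> r powr (1 - dd)" .
      have "1 \<le> real Q ^ c" using Q2 by simp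
      then show "r \<le> \<sigma> c" using r by (simp add: \<sigma>_def)
      show "0 < \<sigma> c" using r Q2 by (simp add: \<sigma>_def)
      have "r powr (1 - dd) \<le> 1" using r dd by (intro powr_le1) auto
      then show "\<sigma> c \<le> 1" using \<open>\<sigma> c \<le> r powr (1 - dd)\<close> by simp
    qed
    define N where "N c = (SOME N. real q ^ N * \<sigma> c \<le> 1 \<and> 1 < real q ^ Suc N * \<sigma> c)" for c
    have Nb: "real q ^ N c * \<sigma> c \<le> 1" "1 < real q ^ Suc (N c) * \<sigma> c" if "c \<le> C0" for c
      using someI_ex[OF exN[OF q2 \<sigma>b(3)[OF that] \<sigma>b(4)[OF that]]] unfolding N_def by auto
    define Mc where "Mc c = real q ^ N c * real Q ^ c" for c
    have Mc0: "Mc c > 0" for c using q2 Q2 by (simp add: Mc_def)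
    define I where "I c R D = {(real q ^ N c * of_int R + of_int D) / Mc c - 1 / (2 * Mc c) ..
                                (real q ^ N c * of_int R + of_int D) / Mc c + 1 / (2 * Mc c)}" for c R D
    define Ix where "Ix = (SIGMA c:{0..C0}. SIGMA R:{- int (Q ^ c)..int (Q ^ c)}. Dset q (N c) J)"
    have fIx: "finite Ix" unfolding Ix_def using Dset_card by (auto intro!: finite_SigmaI)
    define E where "E = (\<Union>(c, R, D)\<in>Ix. {-1/2..1/2} \<inter> I c R D)"
    have Esub: "E \<subseteq> {-1/2..1/2}" unfolding E_def by auto
    have Emeas: "E \<in> sets lebesgue" unfolding E_def I_def using fIx by (intro sets.finite_UN) auto
    show "\<exists>E. E \<subseteq> {-1/2..1/2} \<and> E \<in> sets lebesgue \<and>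
                  measure lebesgue E \<le> B * r powr (1 - \<delta>) \<and>
                  (\<forall>y \<in> {-1/2..1/2} - E. Sigma_sum 2 p r y \<ge> K * ln (1 / r))"
    proof (intro exI[of _ E] conjI Esub Emeas)
      show "measure lebesgue E \<le> B * r powr (1 - \<delta>)"
      proof -
        define Rs where "Rs c = {- int (Q ^ c)..int (Q ^ c)}" for c
        have cRs: "real (card (Rs c)) \<le> 3 * real Q ^ c" for c
        proof -
          have "card (Rs c) = nat (2 * int (Q ^ c) + 1)" by (simp add: Rs_def)
          also have "\<dots> = 2 * Q ^ c + 1"
          proof -
            have "2 * int (Q ^ c) + 1 = int (2 * Q ^ c + 1)" by simp
            then show ?thesis by (metis nat_int)
          qed
          finally have "real (card (Rs c)) = 2 * real Q ^ c + 1" by simp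
          moreover have "1 \<le> real Q ^ c" using Q2 by simp
          ultimately show ?thesis by linarith
        qed
        have m1: "measure lebesgue E \<le> (\<Sum>i\<in>Ix. measure lebesgue ((\<lambda>(c, R, D). {-1/2..1/2} \<inter> I c R D) i))"
          unfolding E_def by (rule measure_UNION_le[OF fIx]) (auto simp: I_def split: prod.splits)
        have m2: "measure lebesgue ({-1/2..1/2} \<inter> I c R D) \<le> 1 / Mc c" for c R D
        proof -
          have "measure lebesgue ({-1/2..1/2} \<inter> I c R D) \<le> measure lebesgue (I c R D)"
            by (rule measure_mono_fmeasurable) (auto simp: I_def)
          also have "measure lebesgue (I c R D) = 1 / Mc c"
            using Mc0[of c] by (simp add: I_def measure_completion field_simps)
          finally show ?thesis .
        qed
        have "(\<Sum>i\<in>Ix. measure lebesgue ((\<lambda>(c, R, D). {-1/2..1/2} \<inter> I c R D) i))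
              \<le> (\<Sum>i\<in>Ix. 1 / Mc (fst i))"
        proof (rule sum_mono)
          fix i assume "i \<in> Ix"
          obtain c R D where i: "i = (c, R, D)" by (cases i) auto
          show "measure lebesgue ((\<lambda>(c, R, D). {-1/2..1/2} \<inter> I c R D) i) \<le> 1 / Mc (fst i)"
            unfolding i using m2[of c R D] by simp
        qed
        also have "\<dots> = (\<Sum>c\<in>{0..C0}. real (card (Rs c)) * real (card (Dset q (N c) J)) / Mc c)"
        proof -
          have fin2: "\<forall>c\<in>{0..C0}. finite (SIGMA R:Rs c. Dset q (N c) J)" using Dset_card by (auto simp: Rs_def)
          have "(\<Sum>i\<in>Ix. 1 / Mc (fst i)) = (\<Sum>c\<in>{0..C0}. \<Sum>x\<in>(SIGMA R:Rs c. Dset q (N c) J). 1 / Mc c)"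
            unfolding Ix_def Rs_def[symmetric] by (subst sum.Sigma[OF _ fin2]) (auto simp: case_prod_beta')
          also have "\<dots> = (\<Sum>c\<in>{0..C0}. real (card (Rs c)) * real (card (Dset q (N c) J)) / Mc c)"
          proof (rule sum.cong[OF refl])
            fix c assume "c \<in> {0..C0}"
            have "card (SIGMA R:Rs c. Dset q (N c) J) = card (Rs c) * card (Dset q (N c) J)"
              using card_cartesian_product[of "Rs c" "Dset q (N c) J"] by simp
            then show "(\<Sum>x\<in>(SIGMA R:Rs c. Dset q (N c) J). 1 / Mc c) = real (card (Rs c)) * real (card (Dset q (N c) J)) / Mc c"
              by simp
          qed
          finally show ?thesis .
        qed
        also have "\<dots> \<le> (\<Sum>c\<in>{0..C0}. 3 * real q * (a1 * (2 * real q + 1)) ^ (2*J) * (L+1) ^ (2*J) * r powr (1 - dd))"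
        proof (rule sum_mono)
          fix c assume "c \<in> {0..C0}"
          then have cc: "c \<le> C0" by simp
          have Nc1: "real (N c) + 1 \<le> a1 * (L + 1)"
          proof -
            have "real q ^ N c * r \<le> real q ^ N c * \<sigma> c" using \<sigma>b(2)[OF cc] q2 by (intro mult_left_mono) auto
            then have "real q ^ N c * r \<le> 1" using Nb(1)[OF cc] by linarith
            then have "real q ^ N c \<le> 1 / r" using r by (simp add: field_simps)
            then have "ln (real q ^ N c) \<le> ln (1/r)" using q2 r by (subst ln_le_cancel_iff) auto
            then have "real (N c) * ln (real q) \<le> L" using q2 by (simp add: ln_realpow L_def)
            then have "real (N c) \<le> L / ln (real q)" using lq by (simp add: field_simps)
            moreover have "L / ln (real q) + 1 \<le> a1 * (L + 1)" using L0 lq unfolding a1_def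
              by (simp add: field_simps)
            ultimately show ?thesis by linarith
          qed
          have cD: "real (card (Dset q (N c) J)) \<le> (a1 * (L + 1) * (2 * real q + 1)) ^ (2*J)"
          proof -
            have "real (card (Dset q (N c) J)) \<le> real (((N c + 1) * (2 * q + 1)) ^ (2 * J))"
              using Dset_card[of q "N c" J] by linarith
            also have "\<dots> = ((real (N c) + 1) * (2 * real q + 1)) ^ (2 * J)" by (simp add: algebra_simps)
            also have "\<dots> \<le> (a1 * (L + 1) * (2 * real q + 1)) ^ (2*J)"
              using Nc1 by (intro power_mono mult_right_mono) auto
            finally show ?thesis .
          qed
          have iq: "1 / real q ^ N c \<le> real q * r powr (1 - dd)"
          proof -
            have "1 < real q * (real q ^ N c * \<sigma> c)" using Nb(2)[OF cc] by (simp add: algebra_simps)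
            then have "1 / real q ^ N c < real q * \<sigma> c" using q2 by (simp add: field_simps)
            also have "\<dots> \<le> real q * r powr (1 - dd)" using \<sigma>b(1)[OF cc] q2 by (intro mult_left_mono) auto
            finally show ?thesis by simp
          qed
          have "real (card (Rs c)) * real (card (Dset q (N c) J)) / Mc c
                = (real (card (Rs c)) / real Q ^ c) * real (card (Dset q (N c) J)) * (1 / real q ^ N c)"
            unfolding Mc_def by (simp add: field_simps)
          also have "\<dots> \<le> 3 * (a1 * (L + 1) * (2 * real q + 1)) ^ (2*J) * (real q * r powr (1 - dd))"
          proof (intro mult_mono)
            show "real (card (Rs c)) / real Q ^ c \<le> 3" using cRs[of c] Q2 by (simp add: field_simps)
          qed (use cD iq q2 in auto)
          also have "\<dots> = 3 * real q * (a1 * (2 * real q + 1)) ^ (2*J) * (L+1) ^ (2*J) * r powr (1 - dd)"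
          proof -
            have pe: "(a1 * (L + 1) * (2 * real q + 1)) ^ (2*J) = (a1 * (2 * real q + 1)) ^ (2*J) * (L+1) ^ (2*J)"
              by (simp only: power_mult_distrib mult_ac)
            show ?thesis unfolding pe by (simp add: mult_ac)
          qed
          finally show "real (card (Rs c)) * real (card (Dset q (N c) J)) / Mc c \<le> 3 * real q * (a1 * (2 * real q + 1)) ^ (2*J) * (L+1) ^ (2*J) * r powr (1 - dd)" .
        qed
        also have "\<dots> = (real C0 + 1) * (3 * real q * (a1 * (2 * real q + 1)) ^ (2*J) * (L+1) ^ (2*J) * r powr (1 - dd))"
          by simp
        also have "\<dots> \<le> (a2 * (L + 1)) * (3 * real q * (a1 * (2 * real q + 1)) ^ (2*J) * (L+1) ^ (2*J) * r powr (1 - dd))"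
        proof (rule mult_right_mono)
          have "real C0 \<le> dd * L / ln (real Q)"
            using of_int_floor_le[of "dd * L / ln (real Q)"] C0_def dd L0 lQ by simp
          moreover have "dd * L / ln (real Q) + 1 \<le> a2 * (L + 1)" using L0 lQ dd unfolding a2_def
            by (simp add: field_simps)
          ultimately show "real C0 + 1 \<le> a2 * (L + 1)" by linarith
        qed (use q2 a12 L0 r in auto)
        also have "\<dots> = K0 * (L + 1) ^ k * r powr (1 - dd)"
        proof -
          have "(L+1)^k = (L+1) * (L+1)^(2*J)" by (simp add: k_def)
          then show ?thesis unfolding K0_def by (simp only: mult_ac)
        qed
        also have "\<dots> \<le> K0 * ((real k / \<eta>) ^ k * exp \<eta> * r powr (- \<eta>)) * r powr (1 - dd)"
        proof (intro mult_right_mono mult_left_mono)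
          have k1: "k \<ge> 1" by (simp add: k_def)
          have "(\<eta> * (L + 1)) ^ k \<le> real k ^ k * exp (\<eta> * (L + 1))"
            using dd L0 k1 by (intro poly_exp) auto
          then have "\<eta> ^ k * (L + 1) ^ k \<le> \<eta> ^ k * ((real k / \<eta>) ^ k * exp (\<eta> * (L + 1)))"
            using dd by (simp add: power_mult_distrib power_divide)
          then have "(L + 1) ^ k \<le> (real k / \<eta>) ^ k * exp (\<eta> * (L + 1))"
            using dd by (simp add: mult_le_cancel_left_pos)
          also have "exp (\<eta> * (L + 1)) = exp \<eta> * r powr (- \<eta>)"
            using r by (simp add: powr_def lnr exp_add[symmetric] algebra_simps)
          finally show "(L + 1) ^ k \<le> (real k / \<eta>) ^ k * exp \<eta> * r powr (- \<eta>)" by (simp add: mult.assoc)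
        qed (use a12 q2 r in \<open>auto simp: K0_def\<close>)
        also have "\<dots> = B * (r powr (1 - dd) * r powr (- \<eta>))" unfolding B_def by (simp only: mult_ac)
        also have "r powr (1 - dd) * r powr (- \<eta>) = r powr (1 - \<delta>)"
          using r by (simp add: powr_add[symmetric] \<eta>_def)
        finally show ?thesis using m1 by linarith
      qed
      show "\<forall>y \<in> {-1/2..1/2} - E. Sigma_sum 2 p r y \<ge> K * ln (1 / r)"
      proof
        fix y assume y: "y \<in> {-1/2..1/2} - E"
        define G where "G c = {a \<in> {0..N c}. 1/(2*q) \<le> dist_nint (real q ^ a * (real Q ^ c * y))}" for c
        have allJ: "J \<le> card (G c)" if c0: "c \<le> C0" for c
        proof (rule ccontr)
          assume "\<not> J \<le> card (G c)"
          then have cG: "card (G c) < J" by simp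
          obtain D where D: "D \<in> Dset q (N c) J"
            and Dd: "\<bar>real q ^ N c * (real Q ^ c * y) - (real q ^ N c * of_int (round (real Q ^ c * y)) + of_int D)\<bar> \<le> 1/2"
            using sparse[OF q2 cG[unfolded G_def]] by blast
          define R where "R = round (real Q ^ c * y)"
          have yb: "\<bar>y\<bar> \<le> 1/2" using y by auto
          have "\<bar>real Q ^ c * y\<bar> \<le> real Q ^ c * (1/2)" using yb Q2 by (simp add: abs_mult mult_left_mono)
          moreover have "\<bar>of_int R - real Q ^ c * y\<bar> \<le> 1/2" unfolding R_def by (rule of_int_round_abs_le)
          moreover have "1 \<le> real Q ^ c" using Q2 by simp
          ultimately have "\<bar>real_of_int R\<bar> \<le> real Q ^ c" by linarith
          moreover have "real Q ^ c = real_of_int (int Q ^ c)" by simp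
          ultimately have "\<bar>R\<bar> \<le> int Q ^ c" by (metis of_int_abs of_int_le_iff)
          then have Rr: "R \<in> {- int (Q ^ c)..int (Q ^ c)}" by (simp add: abs_le_iff)
          have ix: "(c, R, D) \<in> Ix" unfolding Ix_def using c0 Rr D by auto
          define ctr where "ctr = (real q ^ N c * of_int R + of_int D) / Mc c"
          have e: "y - ctr = (real q ^ N c * (real Q ^ c * y) - (real q ^ N c * of_int R + of_int D)) / Mc c"
          proof -
            have "(real q ^ N c * (real Q ^ c * y) - (real q ^ N c * of_int R + of_int D)) / Mc c
                 = (Mc c * y) / Mc c - (real q ^ N c * of_int R + of_int D) / Mc c"
              unfolding Mc_def by (simp add: diff_divide_distrib algebra_simps)
            also have "\<dots> = y - ctr" using Mc0[of c] unfolding ctr_def by simp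
            finally show ?thesis by simp
          qed
          have "\<bar>y - ctr\<bar> \<le> (1/2) / Mc c" unfolding e abs_divide abs_of_pos[OF Mc0[of c]]
            using Dd Mc0[of c] unfolding R_def[symmetric] by (intro divide_right_mono) auto
          then have "y \<in> I c R D" unfolding I_def ctr_def[symmetric] by (simp add: abs_le_iff)
          then have "y \<in> E" unfolding E_def using ix y by blast
          then show False using y by blast
        qed
        let ?f = "\<lambda>h. dist_nint (real h * y) ^ 2"
        have per: "real J * \<epsilon>^2 \<le> (\<Sum>k\<in>smooth_set_le 1 p (r * real Q ^ c). ?f (Q ^ c * k))" if c0: "c \<in> {0..C0}" for c
        proof -
          have cc: "c \<le> C0" using c0 by simp
          have fin: "finite (smooth_set_le 1 p (r * real Q ^ c))" using \<sigma>b(3)[OF cc] by (intro ss_fin) (simp add: \<sigma>_def)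
          have sub: "(\<lambda>a. q ^ a) ` G c \<subseteq> smooth_set_le 1 p (r * real Q ^ c)"
          proof
            fix h assume "h \<in> (\<lambda>a. q ^ a) ` G c"
            then obtain a where a: "h = q ^ a" "a \<le> N c" by (auto simp: G_def)
            have "real q ^ a \<le> real q ^ N c" using a q2 by (intro power_increasing) auto
            then have "real q ^ a * \<sigma> c \<le> 1" using Nb(1)[OF cc] \<sigma>b(3)[OF cc] by (smt (verit) mult_right_mono)
            then show "h \<in> smooth_set_le 1 p (r * real Q ^ c)"
              using a by (auto simp: smooth_set_le_def ss1 q_def \<sigma>_def algebra_simps)
          qed
          have inj: "inj_on (\<lambda>a. q ^ a) (G c)" using q2 by (auto intro!: inj_onI simp: power_inject_exp)
          have "real J * \<epsilon>^2 \<le> real (card (G c)) * \<epsilon>^2" using allJ[OF cc] by (intro mult_right_mono) auto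
          also have "\<dots> = (\<Sum>a\<in>G c. \<epsilon>^2)" by simp
          also have "\<dots> \<le> (\<Sum>a\<in>G c. ?f (Q ^ c * q ^ a))"
          proof (rule sum_mono)
            fix a assume "a \<in> G c"
            then have "\<epsilon> \<le> dist_nint (real q ^ a * (real Q ^ c * y))" by (simp add: G_def \<epsilon>_def)
            then have "\<epsilon>^2 \<le> dist_nint (real q ^ a * (real Q ^ c * y)) ^ 2" using \<epsilon>0 by (intro power_mono) auto
            then show "\<epsilon>^2 \<le> ?f (Q ^ c * q ^ a)" by (simp add: algebra_simps)
          qed
          also have "\<dots> = (\<Sum>k\<in>(\<lambda>a. q ^ a) ` G c. ?f (Q ^ c * k))" using sum.reindex[OF inj, of "\<lambda>k. ?f (Q ^ c * k)"] by (simp add: comp_def)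
          also have "\<dots> \<le> (\<Sum>k\<in>smooth_set_le 1 p (r * real Q ^ c). ?f (Q ^ c * k))"
            by (rule sum_mono2[OF fin sub]) simp
          finally show ?thesis .
        qed
        have "K * ln (1/r) \<le> real (C0 + 1) * (real J * \<epsilon>^2)"
        proof -
          have "dd * L / ln (real Q) \<le> real C0 + 1" using floor_bound(2)[of "dd * L / ln (real Q)"] dd L0 lQ C0_def by simp
          have "K * L \<le> (real J * \<epsilon>^2 * dd / ln (real Q)) * L" using JK2 L0 by (intro mult_right_mono) auto
          also have "\<dots> = (dd * L / ln (real Q)) * (real J * \<epsilon>^2)" by (simp add: field_simps)
          also have "\<dots> \<le> (real C0 + 1) * (real J * \<epsilon>^2)"
            using \<open>dd * L / ln (real Q) \<le> real C0 + 1\<close> by (intro mult_right_mono) auto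
          finally have fin: "K * L \<le> (real C0 + 1) * (real J * \<epsilon>^2)" .
          have e: "real (C0+1) = real C0 + 1" by simp
          show ?thesis unfolding e L_def[symmetric] by (rule fin)
        qed
        also have "\<dots> = (\<Sum>c\<in>{0..C0}. real J * \<epsilon>^2)" by simp
        also have "\<dots> \<le> (\<Sum>c\<in>{0..C0}. \<Sum>k\<in>smooth_set_le 1 p (r * real Q ^ c). ?f (Q ^ c * k))"
          by (rule sum_mono) (rule per)
        also have "\<dots> \<le> (\<Sum>h\<in>smooth_set_le 2 p r. ?f h)"
        proof -
          have QS: "Q = p (Suc 1)" by (simp add: Q_def numeral_2_eq_2)
          have "Suc 1 = 2" by simp
          have Q1: "Q > 1" using Q2 by simp
          have r0: "0 < r" using r by simp
          have "(\<Sum>c\<in>{0..C0}. \<Sum>k\<in>smooth_set_le 1 p (r * real Q ^ c). ?f (Q ^ c * k))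
                 \<le> (\<Sum>h\<in>smooth_set_le (Suc 1) p r. ?f h)"
            by (rule decomp[where q=Q and p=p and n=1 and \<sigma>=r and f="?f" and Cs="{0..C0}", OF QS Q1 copQ r0]) auto
          then show ?thesis unfolding \<open>Suc 1 = 2\<close> .
        qed
        also have "\<dots> = Sigma_sum 2 p r y" by (simp add: Sigma_sum_def)
        finally show "K * ln (1/r) \<le> Sigma_sum 2 p r y" .
      qed
    qed
  qed
  note H = this
  show ?thesis
    apply (rule exI[of _ B], rule conjI[OF B0])
    apply (rule exI[of _ "1/2::real"], rule conjI, simp)
    by (rule H)
qed

theorem mainTheorem9:
  fixes m :: nat and p :: "nat \<Rightarrow> nat"
  assumes m2: "m \<ge> 2"
    and p1: "1 < p 1"
    and pmono: "strict_mono_on {1..m} p"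
    and pcop: "\<And>i j. i \<in> {1..m} \<Longrightarrow> j \<in> {1..m} \<Longrightarrow> i \<noteq> j \<Longrightarrow> coprime (p i) (p j)"
  shows "(\<exists>A1>0. \<exists>A2>0. \<exists>rs>0. \<forall>r. 0 < r \<and> r < rs \<longrightarrow>
            (\<forall>y::real. \<bar>y\<bar> \<le> r / 2 \<longrightarrow>
               Sigma_sum m p r y \<ge> A1 * (y / r)^2 * (ln (1 / r)) ^ (m - 1)) \<and>
            (\<forall>y::real. r / 2 \<le> \<bar>y\<bar> \<and> \<bar>y\<bar> \<le> 1 / 2 \<longrightarrow>
               Sigma_sum m p r y \<ge> A2 * (ln (1 / r)) ^ (m - 1)))
       \<and> (m = 2 \<longrightarrow>
          (\<forall>K>0. \<forall>\<delta>>0. \<exists>B>0. \<exists>rss>0. \<forall>r. 0 < r \<and> r < rss \<longrightarrow>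
             (\<exists>E. E \<subseteq> {-1/2..1/2} \<and> E \<in> sets lebesgue \<and>
                  measure lebesgue E \<le> B * r powr (1 - \<delta>) \<and>
                  (\<forall>y \<in> {-1/2..1/2} - E. Sigma_sum m p r y \<ge> K * ln (1 / r)))))"
proof -
  have hp: "p i \<ge> 2" if "i \<in> {1..m}" for i
  proof -
    have "p 1 \<le> p i" using strict_mono_on_leD[OF pmono, of 1 i] that m2 by auto
    then show ?thesis using p1 by simp
  qed
  obtain A s0 where A: "A > 0" "s0 > 0" "s0 \<le> 1"
    and LB: "\<And>\<sigma> x. 0 < \<sigma> \<Longrightarrow> \<sigma> \<le> s0 \<Longrightarrow> \<sigma>/2 \<le> dist_nint x \<Longrightarrow> A * ln (1/\<sigma>) ^ (m - 1) \<le> Sigma_sum m p \<sigma> x"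
    using lowb[where m=m and p=p and n=m, OF hp pcop] m2 by auto
  have ab: "\<forall>r. 0 < r \<and> r < s0 \<longrightarrow>
            (\<forall>y::real. \<bar>y\<bar> \<le> r / 2 \<longrightarrow>
               Sigma_sum m p r y \<ge> A * (y / r)^2 * (ln (1 / r)) ^ (m - 1)) \<and>
            (\<forall>y::real. r / 2 \<le> \<bar>y\<bar> \<and> \<bar>y\<bar> \<le> 1 / 2 \<longrightarrow>
               Sigma_sum m p r y \<ge> A * (ln (1 / r)) ^ (m - 1))"
  proof (rule allI, rule impI, rule conjI)
    fix r :: real assume r: "0 < r \<and> r < s0"
    have Lr: "ln (1/r) \<ge> 0" using r A by simp
    show "\<forall>y::real. r / 2 \<le> \<bar>y\<bar> \<and> \<bar>y\<bar> \<le> 1 / 2 \<longrightarrow> Sigma_sum m p r y \<ge> A * (ln (1 / r)) ^ (m - 1)"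
    proof (intro allI impI)
      fix y :: real assume y: "r / 2 \<le> \<bar>y\<bar> \<and> \<bar>y\<bar> \<le> 1 / 2"
      then have "dist_nint y = \<bar>y\<bar>" by (intro dn_small) simp
      then show "Sigma_sum m p r y \<ge> A * (ln (1 / r)) ^ (m - 1)" using LB[of r y] r y by simp
    qed
    show "\<forall>y::real. \<bar>y\<bar> \<le> r / 2 \<longrightarrow> Sigma_sum m p r y \<ge> A * (y / r)^2 * (ln (1 / r)) ^ (m - 1)"
    proof (intro allI impI)
      fix y :: real assume y: "\<bar>y\<bar> \<le> r / 2"
      have hy: "dist_nint (real h * y) ^ 2 = (2 * y / r) ^ 2 * dist_nint (real h * (r/2)) ^ 2"
        if "h \<in> smooth_set_le m p r" for h
      proof -
        have hr: "real h * r \<le> 1" using that by (simp add: smooth_set_le_def)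
        have "real h * \<bar>y\<bar> \<le> real h * (r/2)" using y by (intro mult_left_mono) auto
        then have "\<bar>real h * y\<bar> \<le> real h * (r/2)" by (simp add: abs_mult)
        also have "\<dots> \<le> 1/2" using hr by simp
        finally have d1: "dist_nint (real h * y) = \<bar>real h * y\<bar>" by (rule dn_small)
        have "\<bar>real h * (r/2)\<bar> \<le> 1/2" using hr r by (simp add: abs_mult)
        then have d2: "dist_nint (real h * (r/2)) = \<bar>real h * (r/2)\<bar>" by (rule dn_small)
        show ?thesis unfolding d1 d2 using r by (simp add: power2_eq_square field_simps)
      qed
      have "Sigma_sum m p r y = (2 * y / r) ^ 2 * Sigma_sum m p r (r/2)"
        unfolding Sigma_sum_def sum_distrib_left by (rule sum.cong) (auto simp: hy)
      moreover have "A * (ln (1 / r)) ^ (m - 1) \<le> Sigma_sum m p r (r/2)"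
        using LB[of r "r/2"] r dn_small[of "r/2"] A by simp
      ultimately have "(2 * y / r) ^ 2 * (A * (ln (1 / r)) ^ (m - 1)) \<le> Sigma_sum m p r y"
        by (simp add: mult_left_mono)
      moreover have "A * (y / r)^2 * (ln (1 / r)) ^ (m - 1) \<le> (2 * y / r) ^ 2 * (A * (ln (1 / r)) ^ (m - 1))"
      proof -
        have X: "A * ln (1/r) ^ (m - 1) \<ge> 0" using Lr A by simp
        have "A * (y / r)^2 * (ln (1 / r)) ^ (m - 1) = (y / r)^2 * (A * (ln (1 / r)) ^ (m - 1))" by (simp only: mult_ac)
        also have "\<dots> \<le> (2 * y / r) ^ 2 * (A * (ln (1 / r)) ^ (m - 1))"
        proof (rule mult_right_mono[OF _ X])
          have "(2 * y / r) ^ 2 = 4 * (y / r) ^ 2" by (simp add: power2_eq_square)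
          then show "(y / r)^2 \<le> (2 * y / r) ^ 2" using zero_le_power2[of "y/r"] by linarith
        qed
        finally show ?thesis .
      qed
      ultimately show "Sigma_sum m p r y \<ge> A * (y / r)^2 * (ln (1 / r)) ^ (m - 1)" by linarith
    qed
  qed
  have c: "m = 2 \<longrightarrow>
          (\<forall>K>0. \<forall>\<delta>>0. \<exists>B>0. \<exists>rss>0. \<forall>r. 0 < r \<and> r < rss \<longrightarrow>
             (\<exists>E. E \<subseteq> {-1/2..1/2} \<and> E \<in> sets lebesgue \<and>
                  measure lebesgue E \<le> B * r powr (1 - \<delta>) \<and>
                  (\<forall>y \<in> {-1/2..1/2} - E. Sigma_sum m p r y \<ge> K * ln (1 / r))))"
  proof (intro impI allI)
    fix K \<delta> :: real assume m: "m = 2" and K: "K > 0" and d: "\<delta> > 0"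
    have h1: "p 1 \<ge> 2" "p 2 \<ge> 2" using hp m by auto
    have h2: "coprime (p 1) (p 2)" using pcop[of 1 2] m by auto
    show "\<exists>B>0. \<exists>rss>0. \<forall>r. 0 < r \<and> r < rss \<longrightarrow>
             (\<exists>E. E \<subseteq> {-1/2..1/2} \<and> E \<in> sets lebesgue \<and>
                  measure lebesgue E \<le> B * r powr (1 - \<delta>) \<and>
                  (\<forall>y \<in> {-1/2..1/2} - E. Sigma_sum m p r y \<ge> K * ln (1 / r)))"
      using partc[OF h1 h2 K d] m by simp
  qed
  show ?thesis
    apply (rule conjI[OF _ c])
    apply (rule exI[of _ A], rule conjI[OF A(1)])
    apply (rule exI[of _ A], rule conjI[OF A(1)])
    apply (rule exI[of _ s0], rule conjI[OF A(2)])
    by (rule ab)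
qed

end
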